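(* For every $a>0$, one has the identity in law $$\mathbf{B}'_{a,1/2}+\mathbf{B}'_{a,1/2}\;\stackrel{d}{=}\;\mathbf{B}'_{2a,1/2}\times\left(1+\sqrt{\mathbf{B}_{a,1/2}}\right),$$ where all random variables appearing on the same side of the identity are independent.
   Context: For $p,q>0$, $\mathbf{B}_{p,q}$ denotes a beta random variable with density $\frac{\Gamma(p+q)}{\Gamma(p)\Gamma(q)}x^{p-1}(1-x)^{q-1}$ on $(0,1)$, and $\mathbf{B}'_{p,q}$ denotes a beta prime random variable with density $\frac{\Gamma(p+q)}{\Gamma(p)\Gamma(q)}\frac{x^{p-1}}{(1+x)^{p+q}}$ on $(0,\infty)$. $X\stackrel{d}{=}Y$ means $X$ and $Y$ have the same distribution. *)

theory Defs
  imports "HOL-Probability.Probability"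
begin

definition beta_density :: "real \<Rightarrow> real \<Rightarrow> real \<Rightarrow> real" where
  "beta_density p q x =
     (if 0 < x \<and> x < 1
      then Gamma (p + q) / (Gamma p * Gamma q) * x powr (p - 1) * (1 - x) powr (q - 1)
      else 0)"

definition beta_prime_density :: "real \<Rightarrow> real \<Rightarrow> real \<Rightarrow> real" where
  "beta_prime_density p q x =
     (if 0 < x
      then Gamma (p + q) / (Gamma p * Gamma q) * x powr (p - 1) / (1 + x) powr (p + q)
      else 0)"

definition beta_measure :: "real \<Rightarrow> real \<Rightarrow> real measure" where
  "beta_measure p q = density lborel (\<lambda>x. ennreal (beta_density p q x))"

definition beta_prime_measure :: "real \<Rightarrow> real \<Rightarrow> real measure" where
  "beta_prime_measure p q = density lborel (\<lambda>x. ennreal (beta_prime_density p q x))"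

end

theory Submission
  imports Defs
begin

lemma nn_subst_inc:
  fixes f :: "real \<Rightarrow> ennreal" and g g' :: "real \<Rightarrow> real" and a b :: ereal
  assumes ab: "a < b" and f[measurable]: "f \<in> borel_measurable borel"
  and deriv: "\<And>x. x \<in> einterval a b \<Longrightarrow> (g has_real_derivative g' x) (at x)"
  and cont: "continuous_on (einterval a b) g'"
  and nonneg: "\<And>x. x \<in> einterval a b \<Longrightarrow> 0 \<le> g' x"
  shows "(\<integral>\<^sup>+x. f x * indicator (g ` einterval a b) x \<partial>lborel)
       = (\<integral>\<^sup>+x. f (g x) * ennreal (g' x) * indicator (einterval a b) x \<partial>lborel)"
proof -
  define S where "S = einterval a b"
  obtain l u :: "nat \<Rightarrow> real" where E0: "einterval a b = (\<Union>i. {l i .. u i})"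
    "incseq u" "decseq l" "\<And>i. l i < u i" "\<And>i. a < l i" "\<And>i. u i < b"
    "l \<longlonglongrightarrow> a" "u \<longlonglongrightarrow> b"
    apply (rule einterval_Icc_approximation[OF ab]) apply (rule that) by assumption+
  have E: "S = (\<Union>i. {l i .. u i})"
    "incseq u" "decseq l" "\<And>i. l i < u i" "\<And>i. a < l i" "\<And>i. u i < b"
    using E0 unfolding S_def by auto
  have Sopen: "open S" unfolding S_def by simp
  have sub: "{l i..u i} \<subseteq> S" for i using E(1) by auto
  have contg: "continuous_on S g"
    using deriv unfolding S_def
    by (meson DERIV_isCont continuous_at_imp_continuous_on)
  have monog: "g x \<le> g y" if "x \<in> S" "y \<in> S" "x \<le> y" for x y
  proof -
    have "{x..y} \<subseteq> S" using that unfolding S_def einterval_def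
      apply auto
       apply (metis ereal_less_eq(3) less_le_trans)
      by (metis ereal_less_eq(3) le_less_trans)
    then show ?thesis
      using deriv_nonneg_imp_mono[of x y g g'] deriv nonneg that unfolding S_def
      by (meson atLeastAtMost_iff subsetD)
  qed
  have img: "g ` {l i..u i} = {g (l i)..g (u i)}" for i
  proof
    show "g ` {l i..u i} \<subseteq> {g (l i)..g (u i)}"
      using sub[of i] monog by (auto simp: subset_eq)
    show "{g (l i)..g (u i)} \<subseteq> g ` {l i..u i}"
    proof
      fix y assume y: "y \<in> {g (l i)..g (u i)}"
      have "continuous_on {l i..u i} g" using contg sub[of i] continuous_on_subset by blast
      then obtain x where "l i \<le> x" "x \<le> u i" "g x = y"
        using IVT'[of g "l i" y "u i"] y E(4)[of i] by auto
      then show "y \<in> g ` {l i..u i}" by auto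
    qed
  qed
  have incA: "incseq (\<lambda>i. {l i..u i})"
    using E(2,3) unfolding incseq_def decseq_def by auto
  have incB: "incseq (\<lambda>i. {g (l i)..g (u i)})"
    unfolding incseq_def
  proof (intro allI impI)
    fix m n :: nat assume "m \<le> n"
    then have "l n \<le> l m" "u m \<le> u n" using E(2,3) unfolding incseq_def decseq_def by auto
    moreover have "l n \<in> S" "u n \<in> S" using sub[of n] E(4)[of n] by auto
    moreover have "l m \<in> S" "u m \<in> S" using sub[of m] E(4)[of m] by auto
    ultimately show "{g (l m)..g (u m)} \<le> {g (l n)..g (u n)}" using monog by auto
  qed
  have gS: "g ` S = (\<Union>i. {g (l i)..g (u i)})"
    unfolding E(1) image_UN img ..
  define gg where "gg x = (if x \<in> S then g x else 0)" for x
  define gg' where "gg' x = (if x \<in> S then g' x else 0)" for x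
  have Sb[measurable]: "S \<in> sets borel" unfolding S_def by simp
  have [measurable]: "gg \<in> borel_measurable borel" unfolding gg_def
    by (rule borel_measurable_continuous_on_if[OF Sb contg]) simp
  have [measurable]: "gg' \<in> borel_measurable borel" unfolding gg'_def
    by (rule borel_measurable_continuous_on_if[OF Sb cont[folded S_def]]) simp
  define h where "h x = f (gg x) * ennreal (gg' x) * indicator S x" for x
  have hm[measurable]: "h \<in> borel_measurable borel" unfolding h_def by measurable
  have heq: "h x = f (g x) * ennreal (g' x) * indicator S x" for x
    unfolding h_def gg_def gg'_def by (auto split: split_indicator)
  have step: "(\<integral>\<^sup>+x. f x * indicator {g (l i)..g (u i)} x \<partial>lborel)
     = (\<integral>\<^sup>+x. h x * indicator {l i..u i} x \<partial>lborel)" for i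
  proof -
    have "(\<integral>\<^sup>+x. f x * indicator {g (l i)..g (u i)} x \<partial>lborel)
       = (\<integral>\<^sup>+x. f (g x) * ennreal (g' x) * indicator {l i..u i} x \<partial>lborel)"
      apply (rule nn_integral_substitution_aux[OF f])
      using sub[of i] deriv nonneg E(4)[of i] continuous_on_subset[OF cont[folded S_def] sub[of i]]
      unfolding S_def by auto
    also have "\<dots> = (\<integral>\<^sup>+x. h x * indicator {l i..u i} x \<partial>lborel)"
      using sub[of i] by (intro nn_integral_cong) (auto simp: heq split: split_indicator)
    finally show ?thesis .
  qed
  have "(\<integral>\<^sup>+x. f x * indicator (g ` S) x \<partial>lborel) = emeasure (density lborel f) (g ` S)"
    by (subst emeasure_density) (auto simp: gS)
  also have "\<dots> = (SUP i. emeasure (density lborel f) {g (l i)..g (u i)})"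
    unfolding gS by (rule SUP_emeasure_incseq[symmetric]) (use incB in auto)
  also have "\<dots> = (SUP i. emeasure (density lborel h) {l i..u i})"
    by (simp add: emeasure_density step)
  also have "\<dots> = emeasure (density lborel h) S"
    unfolding E(1) by (rule SUP_emeasure_incseq) (use incA in auto)
  also have "\<dots> = (\<integral>\<^sup>+x. h x * indicator S x \<partial>lborel)"
    by (rule emeasure_density) auto
  also have "\<dots> = (\<integral>\<^sup>+x. f (g x) * ennreal (g' x) * indicator S x \<partial>lborel)"
    by (intro nn_integral_cong) (auto simp: heq split: split_indicator)
  finally show ?thesis unfolding S_def .
qed

lemma nn_subst_dec:
  fixes f :: "real \<Rightarrow> ennreal" and g g' :: "real \<Rightarrow> real" and a b :: ereal
  assumes ab: "a < b" and f[measurable]: "f \<in> borel_measurable borel"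
  and deriv: "\<And>x. x \<in> einterval a b \<Longrightarrow> (g has_real_derivative g' x) (at x)"
  and cont: "continuous_on (einterval a b) g'"
  and nonpos: "\<And>x. x \<in> einterval a b \<Longrightarrow> g' x \<le> 0"
  and meas[measurable]: "g ` einterval a b \<in> sets borel"
  shows "(\<integral>\<^sup>+x. f x * indicator (g ` einterval a b) x \<partial>lborel)
       = (\<integral>\<^sup>+x. f (g x) * ennreal (- g' x) * indicator (einterval a b) x \<partial>lborel)"
proof -
  define S where "S = einterval a b"
  have "(\<integral>\<^sup>+x. f x * indicator (g ` S) x \<partial>lborel)
      = ennreal \<bar>-1\<bar> * (\<integral>\<^sup>+x. f (0 + (-1) * x) * indicator (g ` S) (0 + (-1) * x) \<partial>lborel)"
    by (rule nn_integral_real_affine) (auto simp: S_def)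
  also have "\<dots> = (\<integral>\<^sup>+x. f (- x) * indicator ((\<lambda>x. - g x) ` S) x \<partial>lborel)"
    apply simp apply (intro nn_integral_cong) by (auto simp: indicator_def image_iff)
  also have "\<dots> = (\<integral>\<^sup>+x. f (- (- g x)) * ennreal (- g' x) * indicator S x \<partial>lborel)"
    unfolding S_def
    by (rule nn_subst_inc[OF ab]) (auto intro!: derivative_eq_intros deriv continuous_intros cont nonpos)
  finally show ?thesis unfolding S_def by simp
qed

definition gd :: "real \<Rightarrow> real \<Rightarrow> real" where
  "gd p g = (if 0 < g then g powr (p - 1) * exp (- g) / Gamma p else 0)"

definition lv :: "real \<Rightarrow> real \<Rightarrow> real" where
  "lv c x = (if 0 < x then c / (sqrt pi * x * sqrt x) * exp (- (c\<^sup>2) / x) else 0)"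

lemma gd_meas[measurable]:
  assumes [measurable]: "h \<in> borel_measurable M"
  shows "(\<lambda>x. gd p (h x)) \<in> borel_measurable M"
  unfolding gd_def by measurable

lemma lv_meas[measurable]:
  assumes [measurable]: "f \<in> borel_measurable M" "h \<in> borel_measurable M"
  shows "(\<lambda>x. lv (f x) (h x)) \<in> borel_measurable M"
  unfolding lv_def by measurable

lemma gd_nonneg: "p > 0 \<Longrightarrow> 0 \<le> gd p g"
  unfolding gd_def by (auto intro!: divide_nonneg_pos Gamma_real_pos)

lemma lv_nonneg: "c \<ge> 0 \<Longrightarrow> 0 \<le> lv c x"
  unfolding lv_def by auto

lemma gamma_nn:
  assumes s: "s > 0" and k: "k > 0"
  shows "(\<integral>\<^sup>+t. ennreal (indicator {0<..} t * t powr (s - 1) * exp (- (k * t))) \<partial>lborel)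
        = ennreal (Gamma s / k powr s)"
proof -
  have "(\<integral>\<^sup>+t. ennreal (indicator {0<..} t * t powr (s - 1) * exp (- (k * t))) \<partial>lborel)
    = ennreal \<bar>1/k\<bar> * (\<integral>\<^sup>+t. ennreal (indicator {0<..} (0 + 1/k * t) * (0 + 1/k * t) powr (s - 1) * exp (- (k * (0 + 1/k * t)))) \<partial>lborel)"
    by (rule nn_integral_real_affine) (use k in auto)
  also have "\<dots> = ennreal (1/k) * (\<integral>\<^sup>+t. ennreal (k powr (1 - s)) * ennreal (indicator {0..} t * t powr (s - 1) / exp t) \<partial>lborel)"
    using k by (intro arg_cong2[where f="(*)"] nn_integral_cong)
      (auto simp: indicator_def powr_divide powr_minus_divide ennreal_mult'[symmetric] exp_minus
        field_simps powr_diff)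
  also have "\<dots> = ennreal (1/k) * (ennreal (k powr (1 - s)) * ennreal (Gamma s))"
    by (subst nn_integral_cmult) (auto simp: Gamma_conv_nn_integral_real[OF s])
  also have "\<dots> = ennreal (Gamma s / k powr s)"
    using k s by (simp add: ennreal_mult'[symmetric] Gamma_real_pos less_imp_le powr_diff field_simps)
  finally show ?thesis .
qed

lemma mix:
  assumes p: "p > 0"
  shows "ennreal (beta_prime_density p (1/2) x) = (\<integral>\<^sup>+g. ennreal (gd p g * lv (sqrt g) x) \<partial>lborel)"
proof (cases "x > 0")
  case False
  then show ?thesis by (simp add: beta_prime_density_def lv_def)
next
  case True
  define K where "K = 1 / (Gamma p * sqrt pi * x * sqrt x)"
  define k where "k = 1 + 1/x"
  have Kpos: "K > 0" unfolding K_def using True p by (auto intro!: Gamma_real_pos)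
  have kpos: "k > 0" unfolding k_def using True by (auto intro: add_pos_nonneg)
  have pt: "gd p g * lv (sqrt g) x = K * (indicator {0<..} g * g powr (p + 1/2 - 1) * exp (- (k * g)))" for g
  proof (cases "g > 0")
    case False thus ?thesis by (simp add: gd_def)
  next
    case g: True
    have e1: "sqrt g * g powr (p - 1) = g powr (p + 1/2 - 1)"
      using g by (simp add: powr_half_sqrt[symmetric] powr_add[symmetric])
    have e2: "exp (- g) * exp (- (sqrt g)\<^sup>2 / x) = exp (- (k * g))"
      using g True by (simp add: k_def exp_add[symmetric] field_simps)
    have "gd p g * lv (sqrt g) x = (sqrt g * g powr (p - 1)) * (exp (- g) * exp (- (sqrt g)\<^sup>2 / x)) * K"
      using g True unfolding gd_def lv_def K_def by (simp add: mult_ac)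
    also have "\<dots> = K * (indicator {0<..} g * g powr (p + 1/2 - 1) * exp (- (k * g)))"
      unfolding e1 e2 using g by simp
    finally show ?thesis .
  qed
  have "(\<integral>\<^sup>+g. ennreal (gd p g * lv (sqrt g) x) \<partial>lborel)
      = (\<integral>\<^sup>+g. ennreal K * ennreal (indicator {0<..} g * g powr (p + 1/2 - 1) * exp (- (k * g))) \<partial>lborel)"
    unfolding pt using Kpos by (intro nn_integral_cong) (simp add: ennreal_mult)
  also have "\<dots> = ennreal K * ennreal (Gamma (p + 1/2) / k powr (p + 1/2))"
    using p kpos gamma_nn[of "p + 1/2" k] by (subst nn_integral_cmult) auto
  also have "\<dots> = ennreal (K * (Gamma (p + 1/2) / k powr (p + 1/2)))"
    using Kpos p kpos by (subst ennreal_mult) (auto intro!: divide_nonneg_nonneg Gamma_real_pos[THEN less_imp_le])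
  also have "K * (Gamma (p + 1/2) / k powr (p + 1/2)) = beta_prime_density p (1/2) x"
  proof -
    have kk: "k powr (p + 1/2) = (1 + x) powr (p + 1/2) / x powr (p + 1/2)"
    proof -
      have "k = (1 + x) / x" using True unfolding k_def by (simp add: field_simps)
      then show ?thesis using True by (simp add: powr_divide)
    qed
    have xx: "x powr (p + 1/2) = x powr (p - 1) * (x * sqrt x)"
    proof -
      have "x powr (p + 1/2) = x powr ((p - 1) + 1 + 1/2)" by simp
      also have "\<dots> = x powr (p - 1) * x powr 1 * x powr (1/2)"
        by (simp only: powr_add)
      finally have "x powr (p + 1/2) = x powr (p - 1) * x powr 1 * x powr (1/2)" .
      then show ?thesis using True by (simp add: powr_half_sqrt)
    qed
    show ?thesis
      unfolding beta_prime_density_def K_def kk xx using True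
      by (simp add: Gamma_one_half_real field_simps)
  qed
  finally show ?thesis ..
qed

lemma scale:
  assumes c: "c \<ge> 0" and k: "k > 0" and phi[measurable]: "\<phi> \<in> borel_measurable borel"
  shows "(\<integral>\<^sup>+u. ennreal (lv c u) * \<phi> (k * u) \<partial>lborel) = (\<integral>\<^sup>+s. ennreal (lv (c * sqrt k) s) * \<phi> s \<partial>lborel)"
proof -
  have pt: "k * lv (c * sqrt k) (k * u) = lv c u" for u
  proof (cases "u > 0")
    case True
    then show ?thesis using k c
      by (simp add: lv_def real_sqrt_mult power_mult_distrib field_simps)
  next
    case False
    then show ?thesis using k by (simp add: lv_def zero_less_mult_iff)
  qed
  have "(\<integral>\<^sup>+s. ennreal (lv (c * sqrt k) s) * \<phi> s \<partial>lborel)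
     = ennreal \<bar>k\<bar> * (\<integral>\<^sup>+u. ennreal (lv (c * sqrt k) (0 + k * u)) * \<phi> (0 + k * u) \<partial>lborel)"
    by (rule nn_integral_real_affine) (use k in auto)
  also have "\<dots> = (\<integral>\<^sup>+u. ennreal k * (ennreal (lv (c * sqrt k) (k * u)) * \<phi> (k * u)) \<partial>lborel)"
    using k by (subst nn_integral_cmult) auto
  also have "\<dots> = (\<integral>\<^sup>+u. ennreal (lv c u) * \<phi> (k * u) \<partial>lborel)"
  proof (intro nn_integral_cong)
    fix u
    have "ennreal k * (ennreal (lv (c * sqrt k) (k * u)) * \<phi> (k * u))
        = ennreal (k * lv (c * sqrt k) (k * u)) * \<phi> (k * u)"
      using k c by (simp add: ennreal_mult lv_nonneg mult.assoc)
    then show "ennreal k * (ennreal (lv (c * sqrt k) (k * u)) * \<phi> (k * u)) = ennreal (lv c u) * \<phi> (k * u)"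
      by (simp add: pt)
  qed
  finally show ?thesis ..
qed

lemma ennreal_mult3: "0 \<le> x \<Longrightarrow> 0 \<le> y \<Longrightarrow> 0 \<le> z \<Longrightarrow> ennreal (x * (y * z)) = ennreal x * (ennreal y * ennreal z)"
  by (simp add: ennreal_mult)

lemma gauss_nn:
  assumes s: "s > 0"
  shows "(\<integral>\<^sup>+w. ennreal (exp (- (w\<^sup>2) / s)) \<partial>lborel) = ennreal (sqrt (pi * s))"
proof -
  define \<sigma> where "\<sigma> = sqrt (s / 2)"
  have sig: "\<sigma> > 0" unfolding \<sigma>_def using s by simp
  have sig2: "2 * \<sigma>\<^sup>2 = s" unfolding \<sigma>_def using s by simp
  interpret prob_space "density lborel (normal_density 0 \<sigma>)"
    by (rule prob_space_normal_density[OF sig])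
  have one: "(\<integral>\<^sup>+w. ennreal (normal_density 0 \<sigma> w) \<partial>lborel) = 1"
    using emeasure_space_1 by (simp add: emeasure_density)
  have pt: "exp (- (w\<^sup>2) / s) = sqrt (pi * s) * normal_density 0 \<sigma> w" for w
  proof -
    have e: "sqrt (2 * pi * \<sigma>\<^sup>2) = sqrt (pi * s)" using sig2 by (metis mult.assoc mult.commute)
    show ?thesis unfolding normal_density_def e sig2 using s by simp
  qed
  have "(\<integral>\<^sup>+w. ennreal (exp (- (w\<^sup>2) / s)) \<partial>lborel)
      = (\<integral>\<^sup>+w. ennreal (sqrt (pi * s)) * ennreal (normal_density 0 \<sigma> w) \<partial>lborel)"
    unfolding pt using s by (intro nn_integral_cong) (simp add: ennreal_mult normal_density_nonneg)
  also have "\<dots> = ennreal (sqrt (pi * s))"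
    by (subst nn_integral_cmult) (auto simp: one)
  finally show ?thesis .
qed

lemma J1:
  assumes s: "s > 0" and b: "b > 0" and c: "c > 0"
  shows "(\<integral>\<^sup>+q. ennreal (exp (- ((c * q - b / q)\<^sup>2) / s)) * ennreal (c + b / q\<^sup>2) * indicator {0<..} q \<partial>lborel)
        = ennreal (sqrt (pi * s))"
proof -
  let ?g = "\<lambda>q::real. c * q - b / q"
  have img: "?g ` einterval (ereal 0) \<infinity> = UNIV"
  proof -
   have "w \<in> ?g ` {0<..}" for w
   proof -
    define r where "r = sqrt (w\<^sup>2 + 4 * b * c)"
    have r2: "r\<^sup>2 = w\<^sup>2 + 4 * b * c" unfolding r_def using b c by (simp add: add_nonneg_nonneg)
    have rw: "r > \<bar>w\<bar>" unfolding r_def using b c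
      by (metis abs_ge_zero add_less_cancel_left mult_pos_pos real_sqrt_abs
          real_sqrt_less_mono zero_less_numeral add.right_neutral)
    define q where "q = (w + r) / (2 * c)"
    have q: "q > 0" unfolding q_def using rw c by (auto intro!: divide_pos_pos)
    have "c * q * q - b = w * q"
      unfolding q_def using c r2 by (simp add: field_simps power2_eq_square)
    then have "w = c * q - b / q" using q by (simp add: field_simps)
    then show ?thesis using q by (intro rev_image_eqI[of q]) auto
   qed
   then show ?thesis by auto
  qed
  have "(\<integral>\<^sup>+w. ennreal (exp (- (w\<^sup>2) / s)) * indicator (?g ` einterval (ereal 0) \<infinity>) w \<partial>lborel)
      = (\<integral>\<^sup>+q. ennreal (exp (- ((?g q)\<^sup>2) / s)) * ennreal (c + b / q\<^sup>2) * indicator (einterval (ereal 0) \<infinity>) q \<partial>lborel)"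
    apply (rule nn_subst_inc)
    using b c by (auto intro!: derivative_eq_intros continuous_intros simp: power2_eq_square field_simps)
  then show ?thesis using gauss_nn[OF s] img by simp
qed

lemma Jval:
  assumes s: "s > 0" and b: "b > 0" and c: "c > 0"
  shows "(\<integral>\<^sup>+q. ennreal ((1 + 1/q\<^sup>2) * exp (- ((b/q - c*q)\<^sup>2) / s)) * indicator {0<..} q \<partial>lborel)
       = ennreal ((b + c) / (2 * b * c) * sqrt (pi * s))"
proof -
  define E where "E q = exp (- ((b/q - c*q)\<^sup>2) / s)" for q
  have Em[measurable]: "E \<in> borel_measurable borel" unfolding E_def by measurable
  define J where "J = (\<integral>\<^sup>+q. ennreal ((1 + 1/q\<^sup>2) * E q) * indicator {0<..} q \<partial>lborel)"
  let ?r = "\<lambda>p::real. b / (c * p)"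
  have img: "?r ` einterval (ereal 0) \<infinity> = {0<..}"
  proof -
    have "q \<in> ?r ` {0<..}" if q: "q > 0" for q
      using q b c by (intro rev_image_eqI[of "?r q"]) (auto simp: field_simps)
    moreover have "?r p > 0" if "p > 0" for p using that b c by simp
    ultimately show ?thesis by auto
  qed
  have "J = (\<integral>\<^sup>+q. ennreal ((1 + 1/q\<^sup>2) * E q) * indicator (?r ` einterval (ereal 0) \<infinity>) q \<partial>lborel)"
    unfolding J_def img ..
  also have "\<dots> = (\<integral>\<^sup>+p. ennreal ((1 + 1/(?r p)\<^sup>2) * E (?r p)) * ennreal (- (- b / (c * p\<^sup>2))) * indicator (einterval (ereal 0) \<infinity>) p \<partial>lborel)"
    apply (rule nn_subst_dec)
    prefer 6 apply (simp only: img) apply simp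
    using b c by (auto intro!: derivative_eq_intros continuous_intros simp: power2_eq_square field_simps)
  also have "\<dots> = (\<integral>\<^sup>+p. ennreal ((b / (c * p\<^sup>2) + c / b) * E p) * indicator {0<..} p \<partial>lborel)"
  proof (intro nn_integral_cong)
    fix p :: real
    show "ennreal ((1 + 1/(?r p)\<^sup>2) * E (?r p)) * ennreal (- (- b / (c * p\<^sup>2))) * indicator (einterval (ereal 0) \<infinity>) p
        = ennreal ((b / (c * p\<^sup>2) + c / b) * E p) * indicator {0<..} p"
    proof (cases "p > 0")
      case False then show ?thesis by simp
    next
      case p: True
      have e1: "E (?r p) = E p" unfolding E_def using p b c
        by (simp add: field_simps power2_eq_square)
      have e2: "(1 + 1/(?r p)\<^sup>2) * (b / (c * p\<^sup>2)) = b / (c * p\<^sup>2) + c / b"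
        using p b c by (simp add: field_simps power2_eq_square)
      have "ennreal ((1 + 1/(?r p)\<^sup>2) * E (?r p)) * ennreal (- (- b / (c * p\<^sup>2)))
          = ennreal ((1 + 1/(?r p)\<^sup>2) * E (?r p) * (b / (c * p\<^sup>2)))"
        using p b c by (subst ennreal_mult') (auto simp: E_def)
      also have "\<dots> = ennreal ((b / (c * p\<^sup>2) + c / b) * E p)"
        unfolding e1 e2[symmetric] by (simp add: mult_ac)
      finally show ?thesis using p by simp
    qed
  qed
  finally have J2: "J = (\<integral>\<^sup>+p. ennreal ((b / (c * p\<^sup>2) + c / b) * E p) * indicator {0<..} p \<partial>lborel)" .
  have "J + J = (\<integral>\<^sup>+q. ennreal ((1 + 1/q\<^sup>2) * E q) * indicator {0<..} q + ennreal ((b / (c * q\<^sup>2) + c / b) * E q) * indicator {0<..} q \<partial>lborel)"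
    unfolding J_def by (subst J2[unfolded J_def]) (rule nn_integral_add[symmetric]; measurable)
  also have "\<dots> = (\<integral>\<^sup>+q. ennreal ((b + c) / (b * c)) * (ennreal (exp (- ((c * q - b / q)\<^sup>2) / s)) * ennreal (c + b / q\<^sup>2) * indicator {0<..} q) \<partial>lborel)"
  proof (intro nn_integral_cong)
    fix q :: real
    show "ennreal ((1 + 1/q\<^sup>2) * E q) * indicator {0<..} q + ennreal ((b / (c * q\<^sup>2) + c / b) * E q) * indicator {0<..} q
      = ennreal ((b + c) / (b * c)) * (ennreal (exp (- ((c * q - b / q)\<^sup>2) / s)) * ennreal (c + b / q\<^sup>2) * indicator {0<..} q)"
    proof (cases "q > 0")
      case False then show ?thesis by simp
    next
      case q: True
      have e3: "exp (- ((c * q - b / q)\<^sup>2) / s) = E q" unfolding E_def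
        by (simp add: power2_commute)
      have e4: "(1 + 1/q\<^sup>2) * E q + (b / (c * q\<^sup>2) + c / b) * E q = (b + c) / (b * c) * (E q * (c + b / q\<^sup>2))"
        using q b c by (simp add: field_simps power2_eq_square)
      have "ennreal ((1 + 1/q\<^sup>2) * E q) + ennreal ((b / (c * q\<^sup>2) + c / b) * E q)
          = ennreal ((b + c) / (b * c) * (E q * (c + b / q\<^sup>2)))"
        unfolding e4[symmetric] using q b c by (subst ennreal_plus) (auto simp: E_def)
      also have "\<dots> = ennreal ((b + c) / (b * c)) * (ennreal (E q) * ennreal (c + b / q\<^sup>2))"
        using q b c by (intro ennreal_mult3) (auto simp: E_def)
      finally show ?thesis using q unfolding e3 by simp
    qed
  qed
  also have "\<dots> = ennreal ((b + c) / (b * c)) * ennreal (sqrt (pi * s))"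
    using J1[OF s b c] by (subst nn_integral_cmult) auto
  also have "\<dots> = ennreal ((b + c) / (b * c) * sqrt (pi * s))"
    using b c s by (subst ennreal_mult) auto
  finally have JJ: "J + J = ennreal ((b + c) / (b * c) * sqrt (pi * s))" .
  then have "J \<noteq> \<infinity>" by (cases "J = \<infinity>") auto
  then obtain j where j: "J = ennreal j" "j \<ge> 0" by (cases J) auto
  then have "ennreal (j + j) = ennreal ((b + c) / (b * c) * sqrt (pi * s))"
    using JJ by (simp add: ennreal_plus[symmetric])
  then have "j + j = (b + c) / (b * c) * sqrt (pi * s)"
    using j b c s by (subst (asm) ennreal_inj) auto
  then have "j = (b + c) / (2 * b * c) * sqrt (pi * s)" using b c by (simp add: field_simps)
  then show ?thesis using j unfolding J_def E_def by simp
qed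

lemma conv_alg0:
  fixes b c s q E1 E2 Q :: real
  assumes "q > 0" "s > 0" "Q > 0"
  shows "b * c / (pi * (s\<^sup>2 * q\<^sup>2 / Q\<^sup>2) * (s * q / Q)) * (E1 * E2) * (2 * s * q / Q\<^sup>2)
    = 2 * b * c / (pi * s\<^sup>2) * E1 * ((Q / q\<^sup>2) * E2)"
  using assms by (simp add: field_simps power2_eq_square)

lemma conv_alg:
  fixes b c s q E1 E2 :: real
  assumes "q > 0" "s > 0"
  shows "b * c / (pi * (s\<^sup>2 * q\<^sup>2 / (1 + q\<^sup>2)\<^sup>2) * (s * q / (1 + q\<^sup>2))) * (E1 * E2) * (2 * s * q / (1 + q\<^sup>2)\<^sup>2)
    = 2 * b * c / (pi * s\<^sup>2) * E1 * ((1 + 1/q\<^sup>2) * E2)"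
proof -
  have qq: "1 + q\<^sup>2 > 0" by (simp add: add_pos_nonneg)
  have "1 + 1/q\<^sup>2 = (1 + q\<^sup>2) / q\<^sup>2" using assms by (simp add: field_simps)
  then show ?thesis using conv_alg0[OF assms qq, of b c E1 E2] by simp
qed

lemma conv_pt:
  assumes b: "b > 0" and c: "c > 0" and s: "s > 0" and q: "q > 0"
  shows "lv b (s * q\<^sup>2 / (1 + q\<^sup>2)) * lv c (s - s * q\<^sup>2 / (1 + q\<^sup>2)) * (2 * s * q / (1 + q\<^sup>2)\<^sup>2)
       = 2 * b * c / (pi * s\<^sup>2) * exp (- ((b + c)\<^sup>2) / s) * ((1 + 1/q\<^sup>2) * exp (- ((b/q - c*q)\<^sup>2) / s))"
proof -
  define x where "x = s * q\<^sup>2 / (1 + q\<^sup>2)"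
  define y where "y = s / (1 + q\<^sup>2)"
  have qq: "1 + q\<^sup>2 > 0" by (simp add: add_pos_nonneg)
  have y: "s - s * q\<^sup>2 / (1 + q\<^sup>2) = y" unfolding y_def using qq by (simp add: field_simps)
  have xpos: "x > 0" unfolding x_def using s q qq by simp
  have ypos: "y > 0" unfolding y_def using s qq by simp
  define P where "P = sqrt pi"
  have P: "P * P = pi" "P > 0" unfolding P_def by simp_all
  have sxy: "sqrt x * sqrt y = s * q / (1 + q\<^sup>2)"
  proof -
    have "x * y = (s * q / (1 + q\<^sup>2))\<^sup>2" unfolding x_def y_def using qq
      by (simp add: field_simps power2_eq_square)
    then have "sqrt (x * y) = s * q / (1 + q\<^sup>2)" using s q qq by simp
    then show ?thesis by (simp add: real_sqrt_mult)
  qed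
  have xy: "x * y = s\<^sup>2 * q\<^sup>2 / (1 + q\<^sup>2)\<^sup>2" unfolding x_def y_def using qq
    by (simp add: field_simps power2_eq_square)
  have ex: "b\<^sup>2 / x + c\<^sup>2 / y = ((b + c)\<^sup>2 + (b/q - c*q)\<^sup>2) / s"
    unfolding x_def y_def using qq q s by (simp add: field_simps power2_eq_square)
  have eexp: "exp (- (b\<^sup>2) / x) * exp (- (c\<^sup>2) / y) = exp (- ((b + c)\<^sup>2) / s) * exp (- ((b/q - c*q)\<^sup>2) / s)"
  proof -
    have "exp (- (b\<^sup>2) / x) * exp (- (c\<^sup>2) / y) = exp (- (b\<^sup>2 / x + c\<^sup>2 / y))"
      by (simp add: exp_diff exp_minus field_simps)
    also have "\<dots> = exp (- ((b + c)\<^sup>2) / s + - ((b/q - c*q)\<^sup>2) / s)" unfolding ex by (simp add: add_divide_distrib)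
    finally show ?thesis by (simp add: exp_diff exp_minus field_simps)
  qed
  have "lv b x * lv c y = b * c / (pi * (x * y) * (sqrt x * sqrt y)) * (exp (- (b\<^sup>2) / x) * exp (- (c\<^sup>2) / y))"
    unfolding lv_def P_def[symmetric] P(1)[symmetric] using xpos ypos P by (simp add: field_simps)
  also have "\<dots> = b * c / (pi * (s\<^sup>2 * q\<^sup>2 / (1 + q\<^sup>2)\<^sup>2) * (s * q / (1 + q\<^sup>2))) * (exp (- ((b + c)\<^sup>2) / s) * exp (- ((b/q - c*q)\<^sup>2) / s))"
    unfolding xy sxy eexp ..
  finally have "lv b x * lv c y * (2 * s * q / (1 + q\<^sup>2)\<^sup>2) = b * c / (pi * (s\<^sup>2 * q\<^sup>2 / (1 + q\<^sup>2)\<^sup>2) * (s * q / (1 + q\<^sup>2))) * (exp (- ((b + c)\<^sup>2) / s) * exp (- ((b/q - c*q)\<^sup>2) / s)) * (2 * s * q / (1 + q\<^sup>2)\<^sup>2)"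
    by simp
  also have "\<dots> = 2 * b * c / (pi * s\<^sup>2) * exp (- ((b + c)\<^sup>2) / s) * ((1 + 1/q\<^sup>2) * exp (- ((b/q - c*q)\<^sup>2) / s))"
    using q s by (rule conv_alg)
  finally have F: "lv b x * lv c y * (2 * s * q / (1 + q\<^sup>2)\<^sup>2) = 2 * b * c / (pi * s\<^sup>2) * exp (- ((b + c)\<^sup>2) / s) * ((1 + 1/q\<^sup>2) * exp (- ((b/q - c*q)\<^sup>2) / s))" .
  show ?thesis using F y unfolding x_def by simp
qed

lemma conv:
  assumes b: "b > 0" and c: "c > 0"
  shows "(\<integral>\<^sup>+x. ennreal (lv b x * lv c (s - x)) \<partial>lborel) = ennreal (lv (b + c) s)"
proof (cases "s > 0")
  case False
  have z: "lv b x * lv c (s - x) = 0" for x using False by (auto simp: lv_def)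
  have "lv (b + c) s = 0" using False by (simp add: lv_def)
  then show ?thesis by (simp add: z)
next
  case s: True
  define KK where "KK = 2 * b * c / (pi * s\<^sup>2) * exp (- ((b + c)\<^sup>2) / s)"
  have KK: "KK > 0" unfolding KK_def using b c s by simp
  let ?g = "\<lambda>q::real. s * q\<^sup>2 / (1 + q\<^sup>2)"
  have img: "?g ` einterval (ereal 0) \<infinity> = {0<..<s}"
  proof -
    have "x \<in> ?g ` {0<..}" if x: "0 < x" "x < s" for x
    proof -
      define q where "q = sqrt (x / (s - x))"
      have q2: "q\<^sup>2 = x / (s - x)" unfolding q_def using x by simp
      have "q > 0" unfolding q_def using x by simp
      moreover have "?g q = x" unfolding q2 using x by (simp add: field_simps)
      ultimately show ?thesis by (intro rev_image_eqI[of q]) auto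
    qed
    moreover have "0 < ?g q \<and> ?g q < s" if "q > 0" for q
    proof -
      have qq: "1 + q\<^sup>2 > 0" by (simp add: add_pos_nonneg)
      show ?thesis using that s qq by (simp add: field_simps)
    qed
    ultimately show ?thesis by auto
  qed
  have "(\<integral>\<^sup>+x. ennreal (lv b x * lv c (s - x)) \<partial>lborel)
      = (\<integral>\<^sup>+x. ennreal (lv b x * lv c (s - x)) * indicator (?g ` einterval (ereal 0) \<infinity>) x \<partial>lborel)"
    unfolding img by (intro nn_integral_cong) (auto simp: lv_def indicator_def)
  also have "\<dots> = (\<integral>\<^sup>+q. ennreal (lv b (?g q) * lv c (s - ?g q)) * ennreal (2 * s * q / (1 + q\<^sup>2)\<^sup>2) * indicator (einterval (ereal 0) \<infinity>) q \<partial>lborel)"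
  proof (rule nn_subst_inc)
    show "ereal 0 < \<infinity>" by simp
    show "(\<lambda>x. ennreal (lv b x * lv c (s - x))) \<in> borel_measurable borel" by measurable
    fix q assume "q \<in> einterval (ereal 0) \<infinity>"
    then have q: "q > 0" by simp
    have qq: "1 + q\<^sup>2 \<noteq> 0" by (metis add_pos_nonneg zero_le_power2 zero_less_one less_irrefl)
    show "(?g has_real_derivative 2 * s * q / (1 + q\<^sup>2)\<^sup>2) (at q)"
      using qq by (auto intro!: derivative_eq_intros simp: field_simps power2_eq_square)
    show "0 \<le> 2 * s * q / (1 + q\<^sup>2)\<^sup>2" using q s by simp
  next
    show "continuous_on (einterval (ereal 0) \<infinity>) (\<lambda>q. 2 * s * q / (1 + q\<^sup>2)\<^sup>2)"
    proof -
      have nz: "1 + q\<^sup>2 \<noteq> 0" for q :: real by (metis add_pos_nonneg zero_le_power2 zero_less_one less_irrefl)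
      show ?thesis by (intro continuous_intros) (use nz in auto)
    qed
  qed
  also have "\<dots> = (\<integral>\<^sup>+q. ennreal KK * (ennreal ((1 + 1/q\<^sup>2) * exp (- ((b/q - c*q)\<^sup>2) / s)) * indicator {0<..} q) \<partial>lborel)"
  proof (intro nn_integral_cong)
    fix q :: real
    show "ennreal (lv b (?g q) * lv c (s - ?g q)) * ennreal (2 * s * q / (1 + q\<^sup>2)\<^sup>2) * indicator (einterval (ereal 0) \<infinity>) q
        = ennreal KK * (ennreal ((1 + 1/q\<^sup>2) * exp (- ((b/q - c*q)\<^sup>2) / s)) * indicator {0<..} q)"
    proof (cases "q > 0")
      case False then show ?thesis by simp
    next
      case q: True
      have "ennreal (lv b (?g q) * lv c (s - ?g q)) * ennreal (2 * s * q / (1 + q\<^sup>2)\<^sup>2)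
          = ennreal (lv b (?g q) * lv c (s - ?g q) * (2 * s * q / (1 + q\<^sup>2)\<^sup>2))"
        using q s b c by (subst ennreal_mult') (auto simp: lv_nonneg)
      also have "\<dots> = ennreal (KK * ((1 + 1/q\<^sup>2) * exp (- ((b/q - c*q)\<^sup>2) / s)))"
        unfolding KK_def by (rule arg_cong[where f=ennreal], rule conv_pt[OF b c s q])
      also have "\<dots> = ennreal KK * ennreal ((1 + 1/q\<^sup>2) * exp (- ((b/q - c*q)\<^sup>2) / s))"
        using KK q by (subst ennreal_mult) (auto simp: add_nonneg_nonneg)
      finally show ?thesis using q by simp
    qed
  qed
  also have "\<dots> = ennreal KK * ennreal ((b + c) / (2 * b * c) * sqrt (pi * s))"
    using Jval[OF s b c] by (subst nn_integral_cmult) auto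
  also have "\<dots> = ennreal (lv (b + c) s)"
  proof -
    define P where "P = sqrt pi"
    define S where "S = sqrt s"
    have P: "pi = P * P" "P > 0" unfolding P_def by simp_all
    have S: "s = S * S" "S > 0" unfolding S_def using s by simp_all
    have sps: "sqrt (pi * s) = P * S" unfolding P_def S_def by (simp add: real_sqrt_mult)
    have "KK * ((b + c) / (2 * b * c) * sqrt (pi * s)) = lv (b + c) s"
      unfolding KK_def lv_def sps P_def[symmetric] S_def[symmetric] using s b c
      apply (simp only: if_True)
      unfolding P(1) S(1) using P(2) S(2) b c by (simp add: field_simps power2_eq_square)
    then show ?thesis using KK b c s by (subst ennreal_mult[symmetric]) auto
  qed
  finally show ?thesis .
qed

lemma shift_nn:
  fixes f :: "real \<Rightarrow> ennreal"
  assumes [measurable]: "f \<in> borel_measurable borel"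
  shows "(\<integral>\<^sup>+y. f y \<partial>lborel) = (\<integral>\<^sup>+s. f (s - x) \<partial>lborel)"
  using nn_integral_real_affine[of f 1 "- x"] by simp

lemma stable:
  assumes b: "b > 0" and c: "c > 0" and phi[measurable]: "\<phi> \<in> borel_measurable borel"
  shows "(\<integral>\<^sup>+x. \<integral>\<^sup>+y. ennreal (lv b x * lv c y) * \<phi> (x + y) \<partial>lborel \<partial>lborel)
       = (\<integral>\<^sup>+s. ennreal (lv (b + c) s) * \<phi> s \<partial>lborel)"
proof -
  have "(\<integral>\<^sup>+x. \<integral>\<^sup>+y. ennreal (lv b x * lv c y) * \<phi> (x + y) \<partial>lborel \<partial>lborel)
      = (\<integral>\<^sup>+x. \<integral>\<^sup>+s. ennreal (lv b x * lv c (s - x)) * \<phi> s \<partial>lborel \<partial>lborel)"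
  proof (rule nn_integral_cong)
    fix x :: real
    show "(\<integral>\<^sup>+y. ennreal (lv b x * lv c y) * \<phi> (x + y) \<partial>lborel) = (\<integral>\<^sup>+s. ennreal (lv b x * lv c (s - x)) * \<phi> s \<partial>lborel)"
      by (subst shift_nn[where x=x]) auto
  qed
  also have "\<dots> = (\<integral>\<^sup>+s. \<integral>\<^sup>+x. ennreal (lv b x * lv c (s - x)) * \<phi> s \<partial>lborel \<partial>lborel)"
    by (rule lborel_pair.Fubini') measurable
  also have "\<dots> = (\<integral>\<^sup>+s. (\<integral>\<^sup>+x. ennreal (lv b x * lv c (s - x)) \<partial>lborel) * \<phi> s \<partial>lborel)"
    by (intro nn_integral_cong nn_integral_multc) measurable
  also have "\<dots> = (\<integral>\<^sup>+s. ennreal (lv (b + c) s) * \<phi> s \<partial>lborel)"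
    by (simp add: conv[OF b c])
  finally show ?thesis .
qed

lemma ennreal_mult_swap: "0 \<le> A \<Longrightarrow> 0 \<le> B \<Longrightarrow> ennreal A * c * ennreal B = ennreal (A * B) * c"
  by (simp add: ennreal_mult mult_ac)

lemma half_pt:
  assumes v: "0 < v" "v < 1"
  defines "t \<equiv> (1 - sqrt (1 - v)) / 2"
  shows "t * (1 - t) = v / 4" "sqrt t + sqrt (1 - t) = sqrt (1 + sqrt v)" "0 < t" "t < 1/2"
proof -
  have r: "sqrt (1 - v) * sqrt (1 - v) = 1 - v" using v by simp
  have r0: "0 < sqrt (1 - v)" "sqrt (1 - v) < 1" using v by auto
  show tt: "t * (1 - t) = v / 4" unfolding t_def using r by (simp add: field_simps)
  show "0 < t" "t < 1/2" unfolding t_def using r0 by auto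
  then have "0 \<le> t" "0 \<le> 1 - t" by auto
  have sq: "(sqrt t + sqrt (1 - t))\<^sup>2 = 1 + sqrt v"
  proof -
    have "sqrt t * sqrt (1 - t) = sqrt v / 2"
      by (simp add: real_sqrt_mult[symmetric] tt real_sqrt_divide)
    then show ?thesis using \<open>0 \<le> t\<close> \<open>0 \<le> 1 - t\<close>
      by (simp add: power2_eq_square algebra_simps)
  qed
  have "sqrt (1 + sqrt v) = sqrt t + sqrt (1 - t)"
    using real_sqrt_unique[OF sq] add_nonneg_nonneg[OF real_sqrt_ge_zero[OF \<open>0 \<le> t\<close>] real_sqrt_ge_zero[OF \<open>0 \<le> 1 - t\<close>]] by blast
  then show "sqrt t + sqrt (1 - t) = sqrt (1 + sqrt v)" by simp
qed

lemma half_int: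
  fixes ch :: "real \<Rightarrow> ennreal"
  assumes a: "a > 0" and chi[measurable]: "ch \<in> borel_measurable borel"
  shows "(\<integral>\<^sup>+t. ennreal (indicator {0<..<1} t * (t powr (a - 1) * (1 - t) powr (a - 1))) * ch (sqrt t + sqrt (1 - t)) \<partial>lborel)
     = ennreal (2 * 4 powr (- a)) * (\<integral>\<^sup>+v. ennreal (indicator {0<..<1} v * (v powr (a - 1) * (1 - v) powr (- 1/2))) * ch (sqrt (1 + sqrt v)) \<partial>lborel)"
proof -
  define F where "F t = ennreal (indicator {0<..<1} t * (t powr (a - 1) * (1 - t) powr (a - 1))) * ch (sqrt t + sqrt (1 - t))" for t
  have Fm[measurable]: "F \<in> borel_measurable borel" unfolding F_def by measurable
  have Fsym: "F (1 - t) = F t" for t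
  proof -
    have i: "indicator {0<..<1} (1 - t) = (indicator {0<..<1} t :: real)" by (auto simp: indicator_def)
    show ?thesis unfolding F_def i by (simp add: mult.commute add.commute)
  qed
  define H where "H = (\<integral>\<^sup>+t. F t * indicator {..<1/2} t \<partial>lborel)"
  have "(\<integral>\<^sup>+t. F t \<partial>lborel) = (\<integral>\<^sup>+t. F t * indicator {..<1/2} t + F t * indicator {1/2..} t \<partial>lborel)"
    by (intro nn_integral_cong) (auto simp: indicator_def)
  also have "\<dots> = H + (\<integral>\<^sup>+t. F t * indicator {1/2..} t \<partial>lborel)"
    unfolding H_def by (rule nn_integral_add) measurable
  also have "(\<integral>\<^sup>+t. F t * indicator {1/2..} t \<partial>lborel) = H"
  proof -
    have "(\<integral>\<^sup>+t. F t * indicator {1/2..} t \<partial>lborel)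
        = ennreal \<bar>-1\<bar> * (\<integral>\<^sup>+t. F (1 + (-1) * t) * indicator {1/2..} (1 + (-1) * t) \<partial>lborel)"
      by (rule nn_integral_real_affine) auto
    also have "\<dots> = (\<integral>\<^sup>+t. F t * indicator {..1/2} t \<partial>lborel)"
      using Fsym by (simp add: indicator_def)
    also have "\<dots> = H" unfolding H_def
      by (intro nn_integral_cong_AE) (use AE_lborel_singleton[of "1/2"] in \<open>auto elim!: eventually_mono simp: indicator_def\<close>)
    finally show ?thesis .
  qed
  finally have FH: "(\<integral>\<^sup>+t. F t \<partial>lborel) = 2 * H" by (simp add: mult_2)
  let ?h = "\<lambda>v::real. (1 - sqrt (1 - v)) / 2"
  have img: "?h ` einterval (ereal 0) (ereal 1) = {0<..<1/2}"
  proof -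
    have "t \<in> ?h ` {0<..<1}" if t: "0 < t" "t < 1/2" for t
    proof -
      define v where "v = 4 * t * (1 - t)"
      have vv: "1 - v = (1 - 2 * t)\<^sup>2" unfolding v_def by (simp add: power2_eq_square algebra_simps)
      have "0 < (1 - 2 * t)\<^sup>2" using t by simp
      then have v1: "v < 1" using vv by linarith
      have "0 < v" unfolding v_def using t by simp
      note v = this v1
      note vv
      then have "sqrt (1 - v) = 1 - 2 * t" using t by simp
      then have "?h v = t" by simp
      then show ?thesis using v by (intro rev_image_eqI[of v]) auto
    qed
    moreover have "0 < ?h v \<and> ?h v < 1/2" if "0 < v" "v < 1" for v
      using half_pt(3,4)[OF that] by simp
    ultimately show ?thesis by auto
  qed
  have "H = (\<integral>\<^sup>+t. ennreal (t powr (a - 1) * (1 - t) powr (a - 1)) * ch (sqrt t + sqrt (1 - t)) * indicator (?h ` einterval (ereal 0) (ereal 1)) t \<partial>lborel)"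
    unfolding H_def img F_def by (intro nn_integral_cong) (auto simp: indicator_def)
  also have "\<dots> = (\<integral>\<^sup>+v. ennreal ((?h v) powr (a - 1) * (1 - ?h v) powr (a - 1)) * ch (sqrt (?h v) + sqrt (1 - ?h v)) * ennreal (1 / (4 * sqrt (1 - v))) * indicator (einterval (ereal 0) (ereal 1)) v \<partial>lborel)"
  proof (rule nn_subst_inc)
    fix v assume "v \<in> einterval (ereal 0) (ereal 1)"
    then have v: "0 < v" "v < 1" by auto
    show "(?h has_real_derivative 1 / (4 * sqrt (1 - v))) (at v)"
      using v by (auto intro!: derivative_eq_intros simp: field_simps)
    show "0 \<le> 1 / (4 * sqrt (1 - v))" using v by simp
  next
    show "continuous_on (einterval (ereal 0) (ereal 1)) (\<lambda>v. 1 / (4 * sqrt (1 - v)))"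
      by (intro continuous_intros) auto
  qed (auto)
  also have "\<dots> = (\<integral>\<^sup>+v. ennreal (4 powr (- a)) * (ennreal (indicator {0<..<1} v * (v powr (a - 1) * (1 - v) powr (- 1/2))) * ch (sqrt (1 + sqrt v))) \<partial>lborel)"
  proof (intro nn_integral_cong)
    fix v :: real
    show "ennreal ((?h v) powr (a - 1) * (1 - ?h v) powr (a - 1)) * ch (sqrt (?h v) + sqrt (1 - ?h v)) * ennreal (1 / (4 * sqrt (1 - v))) * indicator (einterval (ereal 0) (ereal 1)) v
      = ennreal (4 powr (- a)) * (ennreal (indicator {0<..<1} v * (v powr (a - 1) * (1 - v) powr (- 1/2))) * ch (sqrt (1 + sqrt v)))"
    proof (cases "0 < v \<and> v < 1")
      case False then show ?thesis by (auto simp: indicator_def)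
    next
      case True
      then have v: "0 < v" "v < 1" by auto
      note hp = half_pt[OF v]
      have e1: "(?h v) powr (a - 1) * (1 - ?h v) powr (a - 1) = (v / 4) powr (a - 1)"
      proof -
        have "(?h v) powr (a - 1) * (1 - ?h v) powr (a - 1) = (?h v * (1 - ?h v)) powr (a - 1)"
          by (rule powr_mult[symmetric])
        also have "\<dots> = (v / 4) powr (a - 1)" by (simp only: hp(1))
        finally show ?thesis .
      qed
      have e2: "(v / 4) powr (a - 1) * (1 / (4 * sqrt (1 - v))) = 4 powr (- a) * (v powr (a - 1) * (1 - v) powr (- 1/2))"
      proof -
        have d: "(v / 4) powr (a - 1) = v powr (a - 1) / 4 powr (a - 1)" using v by (simp add: powr_divide)
        have f: "4 powr (- a) = 1 / (4 powr (a - 1) * 4)" by (simp add: powr_diff powr_minus_divide)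
        have g: "(1 - v) powr (- 1/2) = 1 / sqrt (1 - v)" using v
          by (simp add: powr_minus_divide powr_half_sqrt)
        show ?thesis unfolding d f g using v by (simp add: field_simps)
      qed
      have "ennreal ((?h v) powr (a - 1) * (1 - ?h v) powr (a - 1)) * ch (sqrt (?h v) + sqrt (1 - ?h v)) * ennreal (1 / (4 * sqrt (1 - v)))
          = ennreal ((v / 4) powr (a - 1) * (1 / (4 * sqrt (1 - v)))) * ch (sqrt (1 + sqrt v))"
        unfolding e1 hp(2) using v by (intro ennreal_mult_swap) auto
      also have "\<dots> = ennreal (4 powr (- a)) * (ennreal (v powr (a - 1) * (1 - v) powr (- 1/2)) * ch (sqrt (1 + sqrt v)))"
        unfolding e2 using v by (subst ennreal_mult) (auto simp: mult.assoc)
      finally show ?thesis using v by (simp add: indicator_def)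
    qed
  qed
  also have "\<dots> = ennreal (4 powr (- a)) * (\<integral>\<^sup>+v. ennreal (indicator {0<..<1} v * (v powr (a - 1) * (1 - v) powr (- 1/2))) * ch (sqrt (1 + sqrt v)) \<partial>lborel)"
    by (rule nn_integral_cmult) measurable
  finally have "H = \<dots>" .
  then show ?thesis unfolding F_def[symmetric] FH
    by (simp add: ennreal_mult mult.assoc)
qed

lemma dup_real:
  assumes a: "a > 0"
  shows "Gamma a * Gamma (a + 1/2) = 2 powr (1 - 2 * a) * sqrt pi * Gamma (2 * a)"
proof -
  have z1: "complex_of_real a \<notin> \<int>\<^sub>\<le>\<^sub>0"
    using a by (auto simp: of_real_in_nonpos_Ints_iff dest: nonpos_Ints_nonpos)
  have z2: "complex_of_real a + 1/2 \<notin> \<int>\<^sub>\<le>\<^sub>0"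
  proof -
    have "\<not> (a + 1/2 \<in> \<int>\<^sub>\<le>\<^sub>0)" using a nonpos_Ints_nonpos by fastforce
    then have "complex_of_real (a + 1/2) \<notin> \<int>\<^sub>\<le>\<^sub>0" by (subst of_real_in_nonpos_Ints_iff)
    then show ?thesis by simp
  qed
  have D: "Gamma (complex_of_real a) * Gamma (complex_of_real a + 1/2) =
      exp ((1 - 2 * complex_of_real a) * of_real (ln 2)) * of_real (sqrt pi) * Gamma (2 * complex_of_real a)"
    by (rule Gamma_legendre_duplication[OF z1 z2])
  have e1: "Gamma (complex_of_real a) = of_real (Gamma a)" by (simp add: Gamma_complex_of_real)
  have e2: "Gamma (complex_of_real a + 1/2) = of_real (Gamma (a + 1/2))"
    using Gamma_complex_of_real[of "a + 1/2"] by simp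
  have e3: "Gamma (2 * complex_of_real a) = of_real (Gamma (2 * a))"
    using Gamma_complex_of_real[of "2 * a"] by simp
  have e4: "exp ((1 - 2 * complex_of_real a) * of_real (ln 2)) = of_real (2 powr (1 - 2 * a))"
  proof -
    have "(1 - 2 * complex_of_real a) * of_real (ln 2) = of_real ((1 - 2 * a) * ln 2)" by simp
    then show ?thesis by (simp only: exp_of_real powr_def) simp
  qed
  have "complex_of_real (Gamma a * Gamma (a + 1/2)) = complex_of_real (2 powr (1 - 2 * a) * sqrt pi * Gamma (2 * a))"
    using D unfolding e1 e2 e3 e4 by simp
  then show ?thesis by (simp only: of_real_eq_iff)
qed

lemma bg_const:
  fixes a :: real
  assumes a: "a > 0"
  shows "Gamma (2 * a) / (Gamma a * Gamma a) * (2 * 4 powr (- a)) = Gamma (a + 1/2) / (Gamma a * Gamma (1/2))"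
proof -
  have g: "Gamma a > 0" "Gamma (2 * a) > 0" using a by (auto intro!: Gamma_real_pos)
  have f: "2 * 4 powr (- a) = 2 powr (1 - 2 * a)"
  proof -
    have "(4::real) = 2 powr 2" by simp
    then have "(4::real) powr (- a) = (2 powr 2) powr (- a)" by simp
    also have "\<dots> = 2 powr (2 * (- a))" by (rule powr_powr)
    also have "\<dots> = 2 powr (- 2 * a)" by simp
    finally have "(4::real) powr (- a) = 2 powr (- 2 * a)" .
    then show ?thesis by (simp add: powr_diff powr_minus_divide powr_add)
  qed
  show ?thesis unfolding f Gamma_one_half_real using dup_real[OF a] g
    by (simp add: field_simps)
qed

lemma bg_pt:
  fixes a g t :: real
  assumes a: "a > 0" and g: "g > 0" and t: "0 < t" "t < 1"
  shows "g * (gd a (g * t) * gd a (g - g * t))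
       = Gamma (2 * a) / (Gamma a * Gamma a) * gd (2 * a) g * (t powr (a - 1) * (1 - t) powr (a - 1))"
proof -
  have gt: "g * t > 0" "g - g * t > 0" using g t by (auto simp: algebra_simps)
  have h1: "g - g * t = g * (1 - t)" by (simp add: algebra_simps)
  have p1: "(g * t) powr (a - 1) = g powr (a - 1) * t powr (a - 1)" using g t by (simp add: powr_mult)
  have p2: "(g * (1 - t)) powr (a - 1) = g powr (a - 1) * (1 - t) powr (a - 1)" using g t by (simp add: powr_mult)
  have p3: "g powr (2 * a - 1) = g * g powr (a - 1) * g powr (a - 1)"
  proof -
    have "g powr (2 * a - 1) = g powr (1 + (a - 1) + (a - 1))" by simp
    also have "\<dots> = g powr 1 * g powr (a - 1) * g powr (a - 1)" by (simp only: powr_add)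
    finally show ?thesis using g by simp
  qed
  have ex: "exp (- (g * t)) * exp (- (g * (1 - t))) = exp (- g)"
    by (simp add: exp_add[symmetric] algebra_simps)
  have G: "Gamma a > 0" "Gamma (2 * a) > 0" using a by (auto intro!: Gamma_real_pos)
  show ?thesis
    unfolding gd_def using gt g G
    apply (simp only: if_True h1)
    apply (simp only: p1 p2 p3)
    using ex by (simp add: field_simps)
qed

lemma bg:
  assumes a: "a > 0" and Psi[measurable]: "\<Psi> \<in> borel_measurable borel"
  shows "(\<integral>\<^sup>+g1. \<integral>\<^sup>+g2. ennreal (gd a g1 * gd a g2) * \<Psi> (sqrt g1 + sqrt g2) \<partial>lborel \<partial>lborel)
       = (\<integral>\<^sup>+g. \<integral>\<^sup>+v. ennreal (gd (2 * a) g * beta_density a (1/2) v) * \<Psi> (sqrt (g * (1 + sqrt v))) \<partial>lborel \<partial>lborel)"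
proof -
  define Cb where "Cb = Gamma (a + 1/2) / (Gamma a * Gamma (1/2))"
  have Cb: "Cb > 0" unfolding Cb_def using a by (auto intro!: divide_pos_pos Gamma_real_pos)
  define W where "W g = (\<integral>\<^sup>+v. ennreal (indicator {0<..<1} v * (v powr (a - 1) * (1 - v) powr (- 1/2))) * \<Psi> (sqrt g * sqrt (1 + sqrt v)) \<partial>lborel)" for g
  have L: "(\<integral>\<^sup>+g1. \<integral>\<^sup>+g2. ennreal (gd a g1 * gd a g2) * \<Psi> (sqrt g1 + sqrt g2) \<partial>lborel \<partial>lborel)
     = (\<integral>\<^sup>+g. ennreal (Cb * gd (2 * a) g) * W g \<partial>lborel)"
  proof -
    have "(\<integral>\<^sup>+g1. \<integral>\<^sup>+g2. ennreal (gd a g1 * gd a g2) * \<Psi> (sqrt g1 + sqrt g2) \<partial>lborel \<partial>lborel)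
      = (\<integral>\<^sup>+g1. \<integral>\<^sup>+g. ennreal (gd a g1 * gd a (g - g1)) * \<Psi> (sqrt g1 + sqrt (g - g1)) \<partial>lborel \<partial>lborel)"
    proof (rule nn_integral_cong)
      fix g1 :: real
      show "(\<integral>\<^sup>+g2. ennreal (gd a g1 * gd a g2) * \<Psi> (sqrt g1 + sqrt g2) \<partial>lborel)
          = (\<integral>\<^sup>+g. ennreal (gd a g1 * gd a (g - g1)) * \<Psi> (sqrt g1 + sqrt (g - g1)) \<partial>lborel)"
        by (subst shift_nn[where x=g1]) auto
    qed
    also have "\<dots> = (\<integral>\<^sup>+g. \<integral>\<^sup>+g1. ennreal (gd a g1 * gd a (g - g1)) * \<Psi> (sqrt g1 + sqrt (g - g1)) \<partial>lborel \<partial>lborel)"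
      by (rule lborel_pair.Fubini') measurable
    also have "\<dots> = (\<integral>\<^sup>+g. ennreal (Cb * gd (2 * a) g) * W g \<partial>lborel)"
    proof (rule nn_integral_cong)
      fix g :: real
      show "(\<integral>\<^sup>+g1. ennreal (gd a g1 * gd a (g - g1)) * \<Psi> (sqrt g1 + sqrt (g - g1)) \<partial>lborel)
          = ennreal (Cb * gd (2 * a) g) * W g"
      proof (cases "g > 0")
        case False
        have z: "gd a g1 * gd a (g - g1) = 0" for g1 using False by (auto simp: gd_def)
        have z2: "gd (2 * a) g = 0" using False by (simp add: gd_def)
        show ?thesis by (simp only: z z2) simp
      next
        case g: True
        define K where "K = Gamma (2 * a) / (Gamma a * Gamma a) * gd (2 * a) g"
        have K: "K \<ge> 0" unfolding K_def using a by (auto intro!: mult_nonneg_nonneg divide_nonneg_nonneg gd_nonneg Gamma_real_pos[THEN less_imp_le])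
        define ch where "ch r = \<Psi> (sqrt g * r)" for r
        have chm[measurable]: "ch \<in> borel_measurable borel" unfolding ch_def by measurable
        have "(\<integral>\<^sup>+g1. ennreal (gd a g1 * gd a (g - g1)) * \<Psi> (sqrt g1 + sqrt (g - g1)) \<partial>lborel)
          = ennreal \<bar>g\<bar> * (\<integral>\<^sup>+t. ennreal (gd a (0 + g * t) * gd a (g - (0 + g * t))) * \<Psi> (sqrt (0 + g * t) + sqrt (g - (0 + g * t))) \<partial>lborel)"
          by (rule nn_integral_real_affine) (use g in auto)
        also have "\<dots> = (\<integral>\<^sup>+t. ennreal g * (ennreal (gd a (g * t) * gd a (g - g * t)) * \<Psi> (sqrt (g * t) + sqrt (g - g * t))) \<partial>lborel)"
          using g by (subst nn_integral_cmult) auto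
        also have "\<dots> = (\<integral>\<^sup>+t. ennreal K * (ennreal (indicator {0<..<1} t * (t powr (a - 1) * (1 - t) powr (a - 1))) * ch (sqrt t + sqrt (1 - t))) \<partial>lborel)"
        proof (rule nn_integral_cong)
          fix t :: real
          show "ennreal g * (ennreal (gd a (g * t) * gd a (g - g * t)) * \<Psi> (sqrt (g * t) + sqrt (g - g * t)))
            = ennreal K * (ennreal (indicator {0<..<1} t * (t powr (a - 1) * (1 - t) powr (a - 1))) * ch (sqrt t + sqrt (1 - t)))"
          proof (cases "0 < t \<and> t < 1")
            case False
            have z: "gd a (g * t) * gd a (g - g * t) = 0"
            proof (cases "t \<le> 0")
              case True
              then have "g * t \<le> 0" using g by (simp add: mult_nonneg_nonpos)
              then show ?thesis by (simp add: gd_def)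
            next
              case False
              then have "t \<ge> 1" using \<open>\<not> (0 < t \<and> t < 1)\<close> by auto
              then have "g - g * t \<le> 0" using g by (simp add: algebra_simps mult_le_cancel_left1)
              then show ?thesis by (simp add: gd_def)
            qed
            show ?thesis using False by (simp only: z) (simp add: indicator_def)
          next
            case True
            then have t: "0 < t" "t < 1" by auto
            have sq: "sqrt (g * t) + sqrt (g - g * t) = sqrt g * (sqrt t + sqrt (1 - t))"
            proof -
              have "g - g * t = g * (1 - t)" by (simp add: algebra_simps)
              then show ?thesis by (simp add: real_sqrt_mult distrib_left)
            qed
            have "ennreal g * (ennreal (gd a (g * t) * gd a (g - g * t)) * \<Psi> (sqrt (g * t) + sqrt (g - g * t)))
                = ennreal (g * (gd a (g * t) * gd a (g - g * t))) * ch (sqrt t + sqrt (1 - t))"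
              unfolding sq ch_def using g a by (simp add: ennreal_mult gd_nonneg mult.assoc)
            also have "\<dots> = ennreal (K * (t powr (a - 1) * (1 - t) powr (a - 1))) * ch (sqrt t + sqrt (1 - t))"
              unfolding bg_pt[OF a g t] K_def by (simp add: mult.assoc)
            also have "\<dots> = ennreal K * (ennreal (indicator {0<..<1} t * (t powr (a - 1) * (1 - t) powr (a - 1))) * ch (sqrt t + sqrt (1 - t)))"
              using K t by (simp add: ennreal_mult mult.assoc)
            finally show ?thesis .
          qed
        qed
        also have "\<dots> = ennreal K * (\<integral>\<^sup>+t. ennreal (indicator {0<..<1} t * (t powr (a - 1) * (1 - t) powr (a - 1))) * ch (sqrt t + sqrt (1 - t)) \<partial>lborel)"
          by (rule nn_integral_cmult) measurable
        also have "\<dots> = ennreal K * (ennreal (2 * 4 powr (- a)) * W g)"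
          by (subst half_int[OF a chm]) (simp add: W_def ch_def)
        also have "\<dots> = ennreal (Cb * gd (2 * a) g) * W g"
        proof -
          have "K * (2 * 4 powr (- a)) = (Gamma (2 * a) / (Gamma a * Gamma a) * (2 * 4 powr (- a))) * gd (2 * a) g"
            unfolding K_def by (simp only: mult_ac)
          also have "\<dots> = Cb * gd (2 * a) g" unfolding bg_const[OF a] Cb_def ..
          finally have "K * (2 * 4 powr (- a)) = Cb * gd (2 * a) g" .
          then have "ennreal (Cb * gd (2 * a) g) = ennreal K * ennreal (2 * 4 powr (- a))"
            using K by (simp add: ennreal_mult[symmetric])
          then show ?thesis by (simp add: mult.assoc)
        qed
        finally show ?thesis .
      qed
    qed
    finally show ?thesis .
  qed
  have R: "(\<integral>\<^sup>+g. \<integral>\<^sup>+v. ennreal (gd (2 * a) g * beta_density a (1/2) v) * \<Psi> (sqrt (g * (1 + sqrt v))) \<partial>lborel \<partial>lborel)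
     = (\<integral>\<^sup>+g. ennreal (Cb * gd (2 * a) g) * W g \<partial>lborel)"
  proof (rule nn_integral_cong)
    fix g :: real
    show "(\<integral>\<^sup>+v. ennreal (gd (2 * a) g * beta_density a (1/2) v) * \<Psi> (sqrt (g * (1 + sqrt v))) \<partial>lborel)
        = ennreal (Cb * gd (2 * a) g) * W g"
    proof (cases "g > 0")
      case False
      then show ?thesis by (simp add: gd_def)
    next
      case g: True
      have CG: "Cb * gd (2 * a) g \<ge> 0" using Cb a by (simp add: gd_nonneg)
      have "(\<integral>\<^sup>+v. ennreal (gd (2 * a) g * beta_density a (1/2) v) * \<Psi> (sqrt (g * (1 + sqrt v))) \<partial>lborel)
        = (\<integral>\<^sup>+v. ennreal (Cb * gd (2 * a) g) * (ennreal (indicator {0<..<1} v * (v powr (a - 1) * (1 - v) powr (- 1/2))) * \<Psi> (sqrt g * sqrt (1 + sqrt v))) \<partial>lborel)"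
      proof (rule nn_integral_cong)
        fix v :: real
        show "ennreal (gd (2 * a) g * beta_density a (1/2) v) * \<Psi> (sqrt (g * (1 + sqrt v)))
          = ennreal (Cb * gd (2 * a) g) * (ennreal (indicator {0<..<1} v * (v powr (a - 1) * (1 - v) powr (- 1/2))) * \<Psi> (sqrt g * sqrt (1 + sqrt v)))"
        proof (cases "0 < v \<and> v < 1")
          case False then show ?thesis by (auto simp: beta_density_def indicator_def)
        next
          case True
          have e: "gd (2 * a) g * beta_density a (1/2) v = Cb * gd (2 * a) g * (v powr (a - 1) * (1 - v) powr (- 1/2))"
            using True unfolding beta_density_def Cb_def by (simp add: mult_ac)
          have X: "0 \<le> v powr (a - 1) * (1 - v) powr (- 1/2)" by simp
          show ?thesis unfolding e ennreal_mult[OF CG X] using True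
            by (simp add: real_sqrt_mult mult.assoc indicator_def)
        qed
      qed
      also have "\<dots> = ennreal (Cb * gd (2 * a) g) * W g"
        unfolding W_def by (rule nn_integral_cmult) measurable
      finally show ?thesis .
    qed
  qed
  show ?thesis unfolding L R ..
qed

lemma bpd_meas[measurable]:
  assumes [measurable]: "h \<in> borel_measurable M"
  shows "(\<lambda>x. beta_prime_density p q (h x)) \<in> borel_measurable M"
  unfolding beta_prime_density_def by measurable

lemma bd_meas[measurable]:
  assumes [measurable]: "h \<in> borel_measurable M"
  shows "(\<lambda>x. beta_density p q (h x)) \<in> borel_measurable M"
  unfolding beta_density_def by measurable

lemma Psi_meas[measurable]:
  assumes [measurable]: "\<phi> \<in> borel_measurable borel"
  shows "(\<lambda>c. \<integral>\<^sup>+s. ennreal (lv c s) * \<phi> s \<partial>lborel) \<in> borel_measurable borel"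
  by measurable

lemma mixl:
  assumes p: "p > 0" and H[measurable]: "H \<in> borel_measurable borel"
  shows "(\<integral>\<^sup>+x. ennreal (beta_prime_density p (1/2) x) * H x \<partial>lborel)
       = (\<integral>\<^sup>+g. ennreal (gd p g) * (\<integral>\<^sup>+x. ennreal (lv (sqrt g) x) * H x \<partial>lborel) \<partial>lborel)"
proof -
  have "(\<integral>\<^sup>+x. ennreal (beta_prime_density p (1/2) x) * H x \<partial>lborel)
      = (\<integral>\<^sup>+x. (\<integral>\<^sup>+g. ennreal (gd p g * lv (sqrt g) x) \<partial>lborel) * H x \<partial>lborel)"
    by (simp add: mix[OF p])
  also have "\<dots> = (\<integral>\<^sup>+x. \<integral>\<^sup>+g. ennreal (gd p g * lv (sqrt g) x) * H x \<partial>lborel \<partial>lborel)"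
    by (intro nn_integral_cong nn_integral_multc[symmetric]) measurable
  also have "\<dots> = (\<integral>\<^sup>+g. \<integral>\<^sup>+x. ennreal (gd p g * lv (sqrt g) x) * H x \<partial>lborel \<partial>lborel)"
    by (rule lborel_pair.Fubini') measurable
  also have "\<dots> = (\<integral>\<^sup>+g. ennreal (gd p g) * (\<integral>\<^sup>+x. ennreal (lv (sqrt g) x) * H x \<partial>lborel) \<partial>lborel)"
  proof (rule nn_integral_cong)
    fix g :: real
    have "(\<integral>\<^sup>+x. ennreal (gd p g * lv (sqrt g) x) * H x \<partial>lborel)
        = (\<integral>\<^sup>+x. ennreal (gd p g) * (ennreal (lv (sqrt g) x) * H x) \<partial>lborel)"
    proof (rule nn_integral_cong)
      fix x :: real
      show "ennreal (gd p g * lv (sqrt g) x) * H x = ennreal (gd p g) * (ennreal (lv (sqrt g) x) * H x)"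
      proof (cases "g > 0")
        case True then show ?thesis using p by (simp add: ennreal_mult gd_nonneg lv_nonneg mult.assoc)
      next
        case False then show ?thesis by (simp add: gd_def)
      qed
    qed
    also have "\<dots> = ennreal (gd p g) * (\<integral>\<^sup>+x. ennreal (lv (sqrt g) x) * H x \<partial>lborel)"
      by (rule nn_integral_cmult) measurable
    finally show "(\<integral>\<^sup>+x. ennreal (gd p g * lv (sqrt g) x) * H x \<partial>lborel)
        = ennreal (gd p g) * (\<integral>\<^sup>+x. ennreal (lv (sqrt g) x) * H x \<partial>lborel)" .
  qed
  finally show ?thesis .
qed

lemma inner_stable:
  assumes b: "b > 0" and c: "c > 0" and phi[measurable]: "\<phi> \<in> borel_measurable borel"
  shows "(\<integral>\<^sup>+y. ennreal (lv c y) * (\<integral>\<^sup>+x. ennreal (lv b x) * \<phi> (x + y) \<partial>lborel) \<partial>lborel)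
       = (\<integral>\<^sup>+s. ennreal (lv (b + c) s) * \<phi> s \<partial>lborel)"
proof -
  have "(\<integral>\<^sup>+y. ennreal (lv c y) * (\<integral>\<^sup>+x. ennreal (lv b x) * \<phi> (x + y) \<partial>lborel) \<partial>lborel)
      = (\<integral>\<^sup>+y. \<integral>\<^sup>+x. ennreal (lv c y) * (ennreal (lv b x) * \<phi> (x + y)) \<partial>lborel \<partial>lborel)"
    by (intro nn_integral_cong nn_integral_cmult[symmetric]) measurable
  also have "\<dots> = (\<integral>\<^sup>+x. \<integral>\<^sup>+y. ennreal (lv c y) * (ennreal (lv b x) * \<phi> (x + y)) \<partial>lborel \<partial>lborel)"
    by (rule lborel_pair.Fubini'[symmetric]) measurable
  also have "\<dots> = (\<integral>\<^sup>+x. \<integral>\<^sup>+y. ennreal (lv b x * lv c y) * \<phi> (x + y) \<partial>lborel \<partial>lborel)"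
    using b c by (intro nn_integral_cong) (simp add: ennreal_mult lv_nonneg mult_ac)
  also have "\<dots> = (\<integral>\<^sup>+s. ennreal (lv (b + c) s) * \<phi> s \<partial>lborel)"
    by (rule stable[OF b c phi])
  finally show ?thesis .
qed

lemma main_int:
  assumes a: "a > 0" and phi[measurable]: "\<phi> \<in> borel_measurable borel"
  shows "(\<integral>\<^sup>+x. \<integral>\<^sup>+y. ennreal (beta_prime_density a (1/2) x) * ennreal (beta_prime_density a (1/2) y) * \<phi> (x + y) \<partial>lborel \<partial>lborel)
       = (\<integral>\<^sup>+u. \<integral>\<^sup>+v. ennreal (beta_prime_density (2 * a) (1/2) u) * ennreal (beta_density a (1/2) v) * \<phi> (u * (1 + sqrt v)) \<partial>lborel \<partial>lborel)"
proof -
  define \<Psi> where "\<Psi> c = (\<integral>\<^sup>+s. ennreal (lv c s) * \<phi> s \<partial>lborel)" for c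
  have Psim[measurable]: "\<Psi> \<in> borel_measurable borel" unfolding \<Psi>_def by measurable
  let ?D = "beta_prime_density a (1/2)"
  let ?D2 = "beta_prime_density (2 * a) (1/2)"
  let ?B = "beta_density a (1/2)"
  have a2: "2 * a > 0" using a by simp
  have L: "(\<integral>\<^sup>+x. \<integral>\<^sup>+y. ennreal (?D x) * ennreal (?D y) * \<phi> (x + y) \<partial>lborel \<partial>lborel)
      = (\<integral>\<^sup>+g1. \<integral>\<^sup>+g2. ennreal (gd a g1 * gd a g2) * \<Psi> (sqrt g1 + sqrt g2) \<partial>lborel \<partial>lborel)"
  proof -
    have "(\<integral>\<^sup>+x. \<integral>\<^sup>+y. ennreal (?D x) * ennreal (?D y) * \<phi> (x + y) \<partial>lborel \<partial>lborel)
        = (\<integral>\<^sup>+x. ennreal (?D x) * (\<integral>\<^sup>+y. ennreal (?D y) * \<phi> (x + y) \<partial>lborel) \<partial>lborel)"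
      by (intro nn_integral_cong) (simp add: nn_integral_cmult[symmetric] mult.assoc)
    also have "\<dots> = (\<integral>\<^sup>+g1. ennreal (gd a g1) * (\<integral>\<^sup>+x. ennreal (lv (sqrt g1) x) * (\<integral>\<^sup>+y. ennreal (?D y) * \<phi> (x + y) \<partial>lborel) \<partial>lborel) \<partial>lborel)"
      by (rule mixl[OF a]) measurable
    also have "\<dots> = (\<integral>\<^sup>+g1. ennreal (gd a g1) * (\<integral>\<^sup>+g2. ennreal (gd a g2) * \<Psi> (sqrt g1 + sqrt g2) \<partial>lborel) \<partial>lborel)"
    proof (rule nn_integral_cong)
      fix g1 :: real
      show "ennreal (gd a g1) * (\<integral>\<^sup>+x. ennreal (lv (sqrt g1) x) * (\<integral>\<^sup>+y. ennreal (?D y) * \<phi> (x + y) \<partial>lborel) \<partial>lborel)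
          = ennreal (gd a g1) * (\<integral>\<^sup>+g2. ennreal (gd a g2) * \<Psi> (sqrt g1 + sqrt g2) \<partial>lborel)"
      proof (cases "g1 > 0")
        case False then show ?thesis by (simp add: gd_def)
      next
        case g1: True
        have "(\<integral>\<^sup>+x. ennreal (lv (sqrt g1) x) * (\<integral>\<^sup>+y. ennreal (?D y) * \<phi> (x + y) \<partial>lborel) \<partial>lborel)
            = (\<integral>\<^sup>+x. \<integral>\<^sup>+y. ennreal (lv (sqrt g1) x) * (ennreal (?D y) * \<phi> (x + y)) \<partial>lborel \<partial>lborel)"
          by (intro nn_integral_cong nn_integral_cmult[symmetric]) measurable
        also have "\<dots> = (\<integral>\<^sup>+y. \<integral>\<^sup>+x. ennreal (lv (sqrt g1) x) * (ennreal (?D y) * \<phi> (x + y)) \<partial>lborel \<partial>lborel)"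
          by (rule lborel_pair.Fubini') measurable
        also have "\<dots> = (\<integral>\<^sup>+y. ennreal (?D y) * (\<integral>\<^sup>+x. ennreal (lv (sqrt g1) x) * \<phi> (x + y) \<partial>lborel) \<partial>lborel)"
          by (intro nn_integral_cong) (simp add: nn_integral_cmult[symmetric] mult_ac)
        also have "\<dots> = (\<integral>\<^sup>+g2. ennreal (gd a g2) * (\<integral>\<^sup>+y. ennreal (lv (sqrt g2) y) * (\<integral>\<^sup>+x. ennreal (lv (sqrt g1) x) * \<phi> (x + y) \<partial>lborel) \<partial>lborel) \<partial>lborel)"
          by (rule mixl[OF a]) measurable
        also have "\<dots> = (\<integral>\<^sup>+g2. ennreal (gd a g2) * \<Psi> (sqrt g1 + sqrt g2) \<partial>lborel)"
        proof (rule nn_integral_cong)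
          fix g2 :: real
          show "ennreal (gd a g2) * (\<integral>\<^sup>+y. ennreal (lv (sqrt g2) y) * (\<integral>\<^sup>+x. ennreal (lv (sqrt g1) x) * \<phi> (x + y) \<partial>lborel) \<partial>lborel)
              = ennreal (gd a g2) * \<Psi> (sqrt g1 + sqrt g2)"
          proof (cases "g2 > 0")
            case False then show ?thesis by (simp add: gd_def)
          next
            case True
            then show ?thesis unfolding \<Psi>_def using g1
              by (subst inner_stable) auto
          qed
        qed
        finally show ?thesis by simp
      qed
    qed
    also have "\<dots> = (\<integral>\<^sup>+g1. \<integral>\<^sup>+g2. ennreal (gd a g1 * gd a g2) * \<Psi> (sqrt g1 + sqrt g2) \<partial>lborel \<partial>lborel)"
      using a by (intro nn_integral_cong) (simp add: nn_integral_cmult[symmetric] ennreal_mult gd_nonneg mult.assoc)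
    finally show ?thesis .
  qed
  have R: "(\<integral>\<^sup>+u. \<integral>\<^sup>+v. ennreal (?D2 u) * ennreal (?B v) * \<phi> (u * (1 + sqrt v)) \<partial>lborel \<partial>lborel)
      = (\<integral>\<^sup>+g. \<integral>\<^sup>+v. ennreal (gd (2 * a) g * ?B v) * \<Psi> (sqrt (g * (1 + sqrt v))) \<partial>lborel \<partial>lborel)"
  proof -
    have "(\<integral>\<^sup>+u. \<integral>\<^sup>+v. ennreal (?D2 u) * ennreal (?B v) * \<phi> (u * (1 + sqrt v)) \<partial>lborel \<partial>lborel)
        = (\<integral>\<^sup>+u. ennreal (?D2 u) * (\<integral>\<^sup>+v. ennreal (?B v) * \<phi> (u * (1 + sqrt v)) \<partial>lborel) \<partial>lborel)"
      by (intro nn_integral_cong) (simp add: nn_integral_cmult[symmetric] mult.assoc)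
    also have "\<dots> = (\<integral>\<^sup>+g. ennreal (gd (2 * a) g) * (\<integral>\<^sup>+u. ennreal (lv (sqrt g) u) * (\<integral>\<^sup>+v. ennreal (?B v) * \<phi> (u * (1 + sqrt v)) \<partial>lborel) \<partial>lborel) \<partial>lborel)"
      by (rule mixl[OF a2]) measurable
    also have "\<dots> = (\<integral>\<^sup>+g. ennreal (gd (2 * a) g) * (\<integral>\<^sup>+v. ennreal (?B v) * \<Psi> (sqrt (g * (1 + sqrt v))) \<partial>lborel) \<partial>lborel)"
    proof (rule nn_integral_cong)
      fix g :: real
      show "ennreal (gd (2 * a) g) * (\<integral>\<^sup>+u. ennreal (lv (sqrt g) u) * (\<integral>\<^sup>+v. ennreal (?B v) * \<phi> (u * (1 + sqrt v)) \<partial>lborel) \<partial>lborel)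
          = ennreal (gd (2 * a) g) * (\<integral>\<^sup>+v. ennreal (?B v) * \<Psi> (sqrt (g * (1 + sqrt v))) \<partial>lborel)"
      proof (cases "g > 0")
        case False then show ?thesis by (simp add: gd_def)
      next
        case g: True
        have "(\<integral>\<^sup>+u. ennreal (lv (sqrt g) u) * (\<integral>\<^sup>+v. ennreal (?B v) * \<phi> (u * (1 + sqrt v)) \<partial>lborel) \<partial>lborel)
            = (\<integral>\<^sup>+u. \<integral>\<^sup>+v. ennreal (lv (sqrt g) u) * (ennreal (?B v) * \<phi> (u * (1 + sqrt v))) \<partial>lborel \<partial>lborel)"
          by (intro nn_integral_cong nn_integral_cmult[symmetric]) measurable
        also have "\<dots> = (\<integral>\<^sup>+v. \<integral>\<^sup>+u. ennreal (lv (sqrt g) u) * (ennreal (?B v) * \<phi> (u * (1 + sqrt v))) \<partial>lborel \<partial>lborel)"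
          by (rule lborel_pair.Fubini') measurable
        also have "\<dots> = (\<integral>\<^sup>+v. ennreal (?B v) * (\<integral>\<^sup>+u. ennreal (lv (sqrt g) u) * \<phi> ((1 + sqrt v) * u) \<partial>lborel) \<partial>lborel)"
          by (intro nn_integral_cong) (simp add: nn_integral_cmult[symmetric] mult_ac)
        also have "\<dots> = (\<integral>\<^sup>+v. ennreal (?B v) * \<Psi> (sqrt (g * (1 + sqrt v))) \<partial>lborel)"
        proof (rule nn_integral_cong)
          fix v :: real
          show "ennreal (?B v) * (\<integral>\<^sup>+u. ennreal (lv (sqrt g) u) * \<phi> ((1 + sqrt v) * u) \<partial>lborel)
              = ennreal (?B v) * \<Psi> (sqrt (g * (1 + sqrt v)))"
          proof (cases "0 < v \<and> v < 1")
            case False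
            then have "?B v = 0" by (auto simp: beta_density_def)
            then show ?thesis by simp
          next
            case True
            then have k: "1 + sqrt v > 0" by (simp add: add_pos_nonneg)
            have "sqrt g * sqrt (1 + sqrt v) = sqrt (g * (1 + sqrt v))" by (simp add: real_sqrt_mult)
            then show ?thesis unfolding \<Psi>_def scale[OF real_sqrt_ge_zero[OF less_imp_le[OF g]] k phi] by simp
          qed
        qed
        finally show ?thesis by simp
      qed
    qed
    also have "\<dots> = (\<integral>\<^sup>+g. \<integral>\<^sup>+v. ennreal (gd (2 * a) g * ?B v) * \<Psi> (sqrt (g * (1 + sqrt v))) \<partial>lborel \<partial>lborel)"
    proof (rule nn_integral_cong)
      fix g :: real
      have Bnn: "0 \<le> ?B v" for v using a
        by (auto simp: beta_density_def intro!: mult_nonneg_nonneg divide_nonneg_nonneg Gamma_real_pos[THEN less_imp_le])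
      show "ennreal (gd (2 * a) g) * (\<integral>\<^sup>+v. ennreal (?B v) * \<Psi> (sqrt (g * (1 + sqrt v))) \<partial>lborel)
        = (\<integral>\<^sup>+v. ennreal (gd (2 * a) g * ?B v) * \<Psi> (sqrt (g * (1 + sqrt v))) \<partial>lborel)"
        using a2 Bnn by (simp add: nn_integral_cmult[symmetric] ennreal_mult gd_nonneg mult.assoc)
    qed
    finally show ?thesis .
  qed
  show ?thesis unfolding L R \<Psi>_def by (rule bg[OF a]) measurable
qed

lemma sf_density:
  assumes [measurable]: "f \<in> borel_measurable borel"
  shows "sigma_finite_measure (density lborel (\<lambda>x. ennreal (f x)))"
  using sigma_finite_measure.sigma_finite_iff_density_finite[OF sigma_finite_lborel, of "\<lambda>x. ennreal (f x)"] by auto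

lemma pair_distr_emeasure:
  assumes D1[measurable]: "D1 \<in> borel_measurable borel" and D2[measurable]: "D2 \<in> borel_measurable borel"
    and h[measurable]: "h \<in> borel_measurable (borel \<Otimes>\<^sub>M borel)" and A[measurable]: "A \<in> sets borel"
  shows "emeasure (distr (density lborel (\<lambda>x. ennreal (D1 x)) \<Otimes>\<^sub>M density lborel (\<lambda>x. ennreal (D2 x))) borel h) A
       = (\<integral>\<^sup>+x. \<integral>\<^sup>+y. ennreal (D1 x) * ennreal (D2 y) * indicator A (h (x, y)) \<partial>lborel \<partial>lborel)"
proof -
  interpret S2: sigma_finite_measure "density lborel (\<lambda>x. ennreal (D2 x))" by (rule sf_density) measurable
  let ?M1 = "density lborel (\<lambda>x. ennreal (D1 x))"
  let ?M2 = "density lborel (\<lambda>x. ennreal (D2 x))"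
  have hm: "h \<in> measurable (?M1 \<Otimes>\<^sub>M ?M2) borel" by measurable
  have "emeasure (distr (?M1 \<Otimes>\<^sub>M ?M2) borel h) A = (\<integral>\<^sup>+z. indicator A z \<partial>distr (?M1 \<Otimes>\<^sub>M ?M2) borel h)"
    by (rule nn_integral_indicator[symmetric]) simp
  also have "\<dots> = (\<integral>\<^sup>+w. indicator A (h w) \<partial>(?M1 \<Otimes>\<^sub>M ?M2))"
    by (rule nn_integral_distr[OF hm]) simp
  also have "\<dots> = (\<integral>\<^sup>+x. \<integral>\<^sup>+y. indicator A (h (x, y)) \<partial>?M2 \<partial>?M1)"
    by (rule S2.nn_integral_fst[symmetric]) measurable
  also have "\<dots> = (\<integral>\<^sup>+x. ennreal (D1 x) * (\<integral>\<^sup>+y. ennreal (D2 y) * indicator A (h (x, y)) \<partial>lborel) \<partial>lborel)"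
    by (subst nn_integral_density; simp add: nn_integral_density)
  also have "\<dots> = (\<integral>\<^sup>+x. \<integral>\<^sup>+y. ennreal (D1 x) * ennreal (D2 y) * indicator A (h (x, y)) \<partial>lborel \<partial>lborel)"
    by (intro nn_integral_cong) (simp add: nn_integral_cmult[symmetric] mult.assoc)
  finally show ?thesis .
qed

theorem theoremA:
  fixes a :: real
  assumes "a > 0"
  shows "distr (beta_prime_measure a (1/2) \<Otimes>\<^sub>M beta_prime_measure a (1/2)) borel
            (\<lambda>(x, y). x + y)
       = distr (beta_prime_measure (2 * a) (1/2) \<Otimes>\<^sub>M beta_measure a (1/2)) borel
            (\<lambda>(x, y). x * (1 + sqrt y))"
proof (rule measure_eqI)
  show "sets (distr (beta_prime_measure a (1/2) \<Otimes>\<^sub>M beta_prime_measure a (1/2)) borel (\<lambda>(x, y). x + y))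
      = sets (distr (beta_prime_measure (2 * a) (1/2) \<Otimes>\<^sub>M beta_measure a (1/2)) borel (\<lambda>(x, y). x * (1 + sqrt y)))"
    by simp
next
  fix A assume "A \<in> sets (distr (beta_prime_measure a (1/2) \<Otimes>\<^sub>M beta_prime_measure a (1/2)) borel (\<lambda>(x, y). x + y))"
  then have A[measurable]: "A \<in> sets borel" by simp
  have "emeasure (distr (beta_prime_measure a (1/2) \<Otimes>\<^sub>M beta_prime_measure a (1/2)) borel (\<lambda>(x, y). x + y)) A
      = (\<integral>\<^sup>+x. \<integral>\<^sup>+y. ennreal (beta_prime_density a (1/2) x) * ennreal (beta_prime_density a (1/2) y) * indicator A (x + y) \<partial>lborel \<partial>lborel)"
    unfolding beta_prime_measure_def by (subst pair_distr_emeasure) (simp_all, measurable)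
  also have "\<dots> = (\<integral>\<^sup>+u. \<integral>\<^sup>+v. ennreal (beta_prime_density (2 * a) (1/2) u) * ennreal (beta_density a (1/2) v) * indicator A (u * (1 + sqrt v)) \<partial>lborel \<partial>lborel)"
    by (rule main_int[OF assms]) measurable
  also have "\<dots> = emeasure (distr (beta_prime_measure (2 * a) (1/2) \<Otimes>\<^sub>M beta_measure a (1/2)) borel (\<lambda>(x, y). x * (1 + sqrt y))) A"
    unfolding beta_prime_measure_def beta_measure_def by (subst pair_distr_emeasure) (simp_all, measurable)
  finally show "emeasure (distr (beta_prime_measure a (1/2) \<Otimes>\<^sub>M beta_prime_measure a (1/2)) borel (\<lambda>(x, y). x + y)) A
      = emeasure (distr (beta_prime_measure (2 * a) (1/2) \<Otimes>\<^sub>M beta_measure a (1/2)) borel (\<lambda>(x, y). x * (1 + sqrt y))) A" .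
qed

end
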